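(* Let $1\le k\le n$, and consider a storage network with node set $\mathcal{N}$ and RTT function $\tau$. (i) If $\mathcal{C}$ is an uncoded storage scheme that is admissible on some nearest-neighbor graph $\mathcal{G}_{k-1}$, then \[ L_{avg}(\mathcal{C})=\frac{1}{kn}\sum_{i\in\mathcal{N}}\sum_{j=0}^{k-1}\lambda_j^{(i)}. \] (ii) Conversely, if an uncoded storage scheme $\mathcal{C}$ satisfies $L_{max}^{(i)}(\mathcal{C})=\lambda_{k-1}^{(i)}$ for all $i\in\mathcal{N}$ and $L_{avg}(\mathcal{C})=\frac{1}{kn}\sum_{i\in\mathcal{N}}\sum_{j=0}^{k-1}\lambda_j^{(i)}$, then $\mathcal{C}$ is admissible on some nearest-neighbor graph $\mathcal{G}_{k-1}$.
   Context: A storage network consists of $n$ nodes $\mathcal{N}=\{1,\dots,n\}$ and a round-trip-time (RTT) function $\tau:\mathcal{N}\times\mathcal{N}\to\mathbb{R}_{\ge 0}$ with $\tau(i,j)=\tau(j,i)$ and $\tau(i,i)=0$. There are $k\le n$ information files $W_1,\dots,W_k$. An uncoded storage scheme stores at each node $i$ exactly one file, $X_i=W_{\sigma(i)}$, for a map $\sigma:\mathcal{N}\to[k]$ (which must be surjective so that all files are stored). File $W_j$ is decodable from $S\subseteq\mathcal{N}$ iff some $t\in S$ has $\sigma(t)=j$. The latency $l_j^{(i)}=\min\{L\ge0: W_j$ decodable from $\{t:\tau(t,i)\le L\}\}$; $L_{max}^{(i)}(\mathcal{C})=\max_{j\in[k]}l_j^{(i)}$ and $L_{avg}(\mathcal{C})=\frac{1}{kn}\sum_{i\in\mathcal{N}}\sum_{j\in[k]}l_j^{(i)}$.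 For node $i$, $\lambda_0^{(i)}\le\dots\le\lambda_{n-1}^{(i)}$ is the sorted list of $\{\tau(j,i):j\in\mathcal{N}\}$ ($\lambda_0^{(i)}=0$). A nearest-neighbor graph $\mathcal{G}_{k-1}$ is a directed graph on $\mathcal{N}$ in which each node $i$ has incoming edges from exactly $k-1$ other nodes whose RTTs to $i$ are the $k-1$ smallest values $\lambda_1^{(i)},\dots,\lambda_{k-1}^{(i)}$ (ties broken arbitrarily); these are the neighbors of $i$. A scheme is admissible on a directed graph $\mathcal{D}$ on $\mathcal{N}$ if for every node $i$ and every $j\in[k]$, $W_j$ is decodable from $\{i\}$ together with the nodes having an edge into $i$ in $\mathcal{D}$. *)

theory Defs
  imports Complex_Main "HOL-Library.Multiset"
begin

definition nodes :: "nat \<Rightarrow> nat set" where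
  "nodes n = {1..n}"

definition rtt_function :: "nat \<Rightarrow> (nat \<Rightarrow> nat \<Rightarrow> real) \<Rightarrow> bool" where
  "rtt_function n tau \<longleftrightarrow>
     (\<forall>i\<in>nodes n. \<forall>j\<in>nodes n. tau i j \<ge> 0 \<and> tau i j = tau j i) \<and>
     (\<forall>i\<in>nodes n. tau i i = 0)"

text \<open>Uncoded storage scheme: node i stores file sigma i; all k files are stored.\<close>
definition uncoded_scheme :: "nat \<Rightarrow> nat \<Rightarrow> (nat \<Rightarrow> nat) \<Rightarrow> bool" where
  "uncoded_scheme n k sigma \<longleftrightarrow> sigma ` nodes n = {1..k}"

definition decodable :: "(nat \<Rightarrow> nat) \<Rightarrow> nat set \<Rightarrow> nat \<Rightarrow> bool" where
  "decodable sigma S j \<longleftrightarrow> (\<exists>t\<in>S. sigma t = j)"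

definition latency :: "nat \<Rightarrow> (nat \<Rightarrow> nat \<Rightarrow> real) \<Rightarrow> (nat \<Rightarrow> nat) \<Rightarrow> nat \<Rightarrow> nat \<Rightarrow> real" where
  "latency n tau sigma i j =
     (LEAST L. L \<ge> 0 \<and> decodable sigma {t \<in> nodes n. tau t i \<le> L} j)"

definition L_max :: "nat \<Rightarrow> nat \<Rightarrow> (nat \<Rightarrow> nat \<Rightarrow> real) \<Rightarrow> (nat \<Rightarrow> nat) \<Rightarrow> nat \<Rightarrow> real" where
  "L_max n k tau sigma i = Max ((\<lambda>j. latency n tau sigma i j) ` {1..k})"

definition L_avg :: "nat \<Rightarrow> nat \<Rightarrow> (nat \<Rightarrow> nat \<Rightarrow> real) \<Rightarrow> (nat \<Rightarrow> nat) \<Rightarrow> real" where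
  "L_avg n k tau sigma =
     (1 / (real k * real n)) * (\<Sum>i\<in>nodes n. \<Sum>j\<in>{1..k}. latency n tau sigma i j)"

text \<open>\<open>lambda_seq n tau i m\<close> is the m-th smallest (0-based) of the values tau j i, j in nodes.\<close>
definition lambda_seq :: "nat \<Rightarrow> (nat \<Rightarrow> nat \<Rightarrow> real) \<Rightarrow> nat \<Rightarrow> nat \<Rightarrow> real" where
  "lambda_seq n tau i m = sort (map (\<lambda>j. tau j i) [1..<n+1]) ! m"

text \<open>A directed graph on the nodes is given by its in-neighbourhoods: \<open>G i\<close> is the set
  of nodes having an edge into i.\<close>
definition nn_graph :: "nat \<Rightarrow> nat \<Rightarrow> (nat \<Rightarrow> nat \<Rightarrow> real) \<Rightarrow> (nat \<Rightarrow> nat set) \<Rightarrow> bool" where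
  "nn_graph n k tau G \<longleftrightarrow>
     (\<forall>i\<in>nodes n. G i \<subseteq> nodes n - {i} \<and> card (G i) = k - 1 \<and>
        image_mset (\<lambda>t. tau t i) (mset_set (G i)) = mset (map (lambda_seq n tau i) [1..<k]))"

definition admissible :: "nat \<Rightarrow> nat \<Rightarrow> (nat \<Rightarrow> nat) \<Rightarrow> (nat \<Rightarrow> nat set) \<Rightarrow> bool" where
  "admissible n k sigma G \<longleftrightarrow>
     (\<forall>i\<in>nodes n. \<forall>j\<in>{1..k}. decodable sigma ({i} \<union> G i) j)"

end

theory Submission
  imports Defs
begin

lemma sorted_take_le:
  fixes xs :: "real list"
  shows "sorted xs \<Longrightarrow> N \<subseteq># mset xs \<Longrightarrow> size N = k \<Longrightarrow>
    sum_list (take k xs) \<le> sum_mset N \<and> (sum_mset N = sum_list (take k xs) \<longrightarrow> N = mset (take k xs))"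
proof (induction xs arbitrary: N k)
  case Nil then show ?case by auto
next
  case (Cons x xs)
  show ?case
  proof (cases k)
    case 0 then show ?thesis using Cons.prems by auto
  next
    case (Suc k')
    have sx: "sorted xs" and xle: "\<forall>y\<in>set xs. x \<le> y" using Cons.prems(1) by auto
    show ?thesis
    proof (cases "x \<in># N")
      case True
      have s1: "N - {#x#} \<subseteq># mset xs" using Cons.prems(2) by (simp add: subset_eq_diff_conv)
      have s2: "size (N - {#x#}) = k'" using True Suc Cons.prems(3) by (simp add: size_Diff_singleton)
      note IH = Cons.IH[OF sx s1 s2]
      have N: "N = add_mset x (N - {#x#})" using True by simp
      have sN: "sum_mset N = x + sum_mset (N - {#x#})" by (subst N) simp
      show ?thesis using IH sN Suc N by auto
    next
      case False
      have sub: "N \<subseteq># mset xs" using Cons.prems(2) False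
        by (simp add: inter_add_left1 subset_mset.inf.absorb_iff2)
      have "N \<noteq> {#}" using Suc Cons.prems(3) by auto
      then obtain y where y: "y \<in># N" by blast
      have "y \<in> set xs" using sub y by (metis mset_subset_eqD set_mset_mset)
      hence xy: "x \<le> y" using xle by auto
      have s1: "N - {#y#} \<subseteq># mset xs" using sub by (meson diff_subset_eq_self subset_mset.order_trans)
      have s2: "size (N - {#y#}) = k'" using y Suc Cons.prems(3) by (simp add: size_Diff_singleton)
      note IH = Cons.IH[OF sx s1 s2]
      have N: "N = add_mset y (N - {#y#})" using y by simp
      have sN: "sum_mset N = y + sum_mset (N - {#y#})" by (subst N) simp
      have "sum_mset N \<noteq> sum_list (take k (x # xs))"
      proof
        assume "sum_mset N = sum_list (take k (x # xs))"
        hence "y = x" using IH sN Suc xy by auto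
        thus False using y False by simp
      qed
      then show ?thesis using IH sN Suc xy by auto
    qed
  qed
qed

lemma latency_min:
  assumes rtt: "rtt_function n tau" and i: "i \<in> nodes n" and t: "t \<in> nodes n" "sigma t = j"
    and mn: "\<forall>t'\<in>nodes n. sigma t' = j \<longrightarrow> tau t i \<le> tau t' i"
  shows "latency n tau sigma i j = tau t i"
  unfolding latency_def
proof (rule Least_equality)
  show "tau t i \<ge> 0 \<and> decodable sigma {t' \<in> nodes n. tau t' i \<le> tau t i} j"
    using rtt t i by (auto simp: rtt_function_def decodable_def)
next
  fix L assume "L \<ge> 0 \<and> decodable sigma {t' \<in> nodes n. tau t' i \<le> L} j"
  then obtain t' where "t' \<in> nodes n" "tau t' i \<le> L" "sigma t' = j" by (auto simp: decodable_def)
  with mn show "tau t i \<le> L" by force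
qed

lemma exists_min:
  fixes tau :: "nat \<Rightarrow> nat \<Rightarrow> real"
  assumes "t \<in> nodes n" "sigma t = j"
  shows "\<exists>t0\<in>nodes n. sigma t0 = j \<and> (\<forall>t'\<in>nodes n. sigma t' = j \<longrightarrow> tau t0 i \<le> tau t' i)"
proof -
  let ?T = "{t\<in>nodes n. sigma t = j}"
  have fin: "finite ((\<lambda>t. tau t i) ` ?T)" by (simp add: nodes_def)
  have ne: "(\<lambda>t. tau t i) ` ?T \<noteq> {}" using assms by auto
  obtain t0 where t0: "t0 \<in> ?T" "tau t0 i = Min ((\<lambda>t. tau t i) ` ?T)"
    using Min_in[OF fin ne] by auto
  show ?thesis using t0 Min_le[OF fin] by auto
qed

lemma latency_le:
  assumes rtt: "rtt_function n tau" and i: "i \<in> nodes n" and t: "t \<in> nodes n" "sigma t = j"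
  shows "latency n tau sigma i j \<le> tau t i"
proof -
  obtain t0 where "t0\<in>nodes n" "sigma t0 = j" "\<forall>t'\<in>nodes n. sigma t' = j \<longrightarrow> tau t0 i \<le> tau t' i"
    using exists_min[of t n sigma j tau i] t by blast
  then show ?thesis using latency_min[OF rtt i] t by metis
qed

lemma mset_X: "mset (sort (map (\<lambda>j. tau j i) [1..<n+1])) = image_mset (\<lambda>t. tau t i) (mset_set (nodes n))"
proof -
  have "{1..<n+1} = nodes n" by (auto simp: nodes_def)
  then show ?thesis by (simp only: mset_sort mset_map mset_upt)
qed

lemma take_nth_map: "k \<le> length xs \<Longrightarrow> take k xs = map (nth xs) [0..<k]"
  by (rule nth_equalityI) auto

lemma X0:
  assumes rtt: "rtt_function n tau" and i: "i \<in> nodes n"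
  shows "sort (map (\<lambda>j. tau j i) [1..<n+1]) ! 0 = 0"
proof -
  let ?X = "sort (map (\<lambda>j. tau j i) [1..<n+1])"
  have sx: "sorted ?X" by simp
  have setX: "set ?X = (\<lambda>t. tau t i) ` nodes n"
  proof -
    have "set [1..<n+1] = nodes n" by (auto simp: nodes_def)
    then show ?thesis by (simp only: set_sort set_map)
  qed
  have len: "length ?X = n" by simp
  have "n > 0" using i by (auto simp: nodes_def)
  hence "?X ! 0 \<in> set ?X" using len by (metis nth_mem)
  hence ge: "?X ! 0 \<ge> 0" using setX rtt i by (auto simp: rtt_function_def)
  have "0 \<in> set ?X" using setX rtt i by (auto simp: rtt_function_def)
  then obtain m where m: "m < length ?X" "?X ! m = 0" by (metis in_set_conv_nth)
  have "?X ! 0 \<le> ?X ! m" using sorted_nth_mono[OF sx, of 0 m] m by simp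
  with ge m show ?thesis by simp
qed

lemma sumlam:
  assumes "1 \<le> k" "k \<le> n"
  shows "(\<Sum>j\<in>{0..k-1}. lambda_seq n tau i j) = sum_list (take k (sort (map (\<lambda>j. tau j i) [1..<n+1])))"
proof -
  let ?X = "sort (map (\<lambda>j. tau j i) [1..<n+1])"
  have "take k ?X = map (nth ?X) [0..<k]" using assms by (intro take_nth_map) simp
  hence "sum_list (take k ?X) = (\<Sum>j\<in>{0..<k}. ?X ! j)"
    by (simp add: sum_list_map_eq_sum_count2 interv_sum_list_conv_sum_set_nat)
  also have "{0..<k} = {0..k-1}" using assms by auto
  finally show ?thesis by (simp add: lambda_seq_def)
qed

lemma take_eq:
  assumes "1 \<le> k" "k \<le> n"
  shows "take k (sort (map (\<lambda>j. tau j i) [1..<n+1])) = sort (map (\<lambda>j. tau j i) [1..<n+1]) ! 0 # map (lambda_seq n tau i) [1..<k]"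
proof -
  let ?X = "sort (map (\<lambda>j. tau j i) [1..<n+1])"
  have "take k ?X = map (nth ?X) [0..<k]" using assms by (intro take_nth_map) simp
  also have "[0..<k] = 0 # [1..<k]" using assms by (simp add: upt_conv_Cons)
  finally show ?thesis by (simp add: lambda_seq_def)
qed

lemma choose_s:
  assumes rtt: "rtt_function n tau" and unc: "uncoded_scheme n k sigma" and i: "i \<in> nodes n"
  shows "\<exists>s. (\<forall>j\<in>{1..k}. s j \<in> nodes n \<and> sigma (s j) = j \<and> latency n tau sigma i j = tau (s j) i)
             \<and> s (sigma i) = i"
proof -
  have si: "sigma i \<in> {1..k}" using unc i by (auto simp: uncoded_scheme_def)
  have "\<forall>j\<in>{1..k}. \<exists>t. t \<in> nodes n \<and> sigma t = j \<and> latency n tau sigma i j = tau t i \<and> (j = sigma i \<longrightarrow> t = i)"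
  proof
    fix j assume j: "j \<in> {1..k}"
    show "\<exists>t. t \<in> nodes n \<and> sigma t = j \<and> latency n tau sigma i j = tau t i \<and> (j = sigma i \<longrightarrow> t = i)"
    proof (cases "j = sigma i")
      case True
      have "\<forall>t'\<in>nodes n. sigma t' = j \<longrightarrow> tau i i \<le> tau t' i"
        using rtt i by (auto simp: rtt_function_def)
      then show ?thesis using latency_min[OF rtt i i] True i by metis
    next
      case False
      obtain t where "t \<in> nodes n" "sigma t = j" proof -
        have "j \<in> sigma ` nodes n" using j unc by (simp add: uncoded_scheme_def)
        then show ?thesis using that by blast
      qed
      then obtain t0 where "t0\<in>nodes n" "sigma t0 = j" "\<forall>t'\<in>nodes n. sigma t' = j \<longrightarrow> tau t0 i \<le> tau t' i"
        using exists_min[of t n sigma j tau i] by blast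
      then show ?thesis using latency_min[OF rtt i] False by metis
    qed
  qed
  then obtain s where "\<forall>j\<in>{1..k}. s j \<in> nodes n \<and> sigma (s j) = j \<and> latency n tau sigma i j = tau (s j) i \<and> (j = sigma i \<longrightarrow> s j = i)"
    by metis
  then show ?thesis using si by metis
qed

lemma node_lemma:
  assumes rtt: "rtt_function n tau" and unc: "uncoded_scheme n k sigma" and i: "i \<in> nodes n"
    and k: "1 \<le> k" "k \<le> n"
  shows "\<exists>s. (\<forall>j\<in>{1..k}. s j \<in> nodes n \<and> sigma (s j) = j) \<and> s (sigma i) = i \<and>
     sum_list (take k (sort (map (\<lambda>j. tau j i) [1..<n+1]))) \<le> (\<Sum>j\<in>{1..k}. latency n tau sigma i j) \<and>
     ((\<Sum>j\<in>{1..k}. latency n tau sigma i j) = sum_list (take k (sort (map (\<lambda>j. tau j i) [1..<n+1])))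
       \<longrightarrow> image_mset (\<lambda>t. tau t i) (mset_set (s ` {1..k})) = mset (take k (sort (map (\<lambda>j. tau j i) [1..<n+1]))))"
proof -
  let ?X = "sort (map (\<lambda>j. tau j i) [1..<n+1])"
  obtain s where s: "\<forall>j\<in>{1..k}. s j \<in> nodes n \<and> sigma (s j) = j \<and> latency n tau sigma i j = tau (s j) i"
    "s (sigma i) = i" using choose_s[OF rtt unc i] by blast
  have inj: "inj_on s {1..k}" by (rule inj_onI) (metis s(1))
  have Ssub: "s ` {1..k} \<subseteq> nodes n" using s by auto
  have sumeq: "(\<Sum>j\<in>{1..k}. latency n tau sigma i j) = sum_mset (image_mset (\<lambda>t. tau t i) (mset_set (s ` {1..k})))"
  proof -
    have "(\<Sum>j\<in>{1..k}. latency n tau sigma i j) = (\<Sum>j\<in>{1..k}. tau (s j) i)" using s by simp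
    also have "\<dots> = (\<Sum>t\<in>s ` {1..k}. tau t i)" using sum.reindex[OF inj, of "\<lambda>t. tau t i"] by simp
    finally show ?thesis by (simp add: sum_unfold_sum_mset)
  qed
  have sub: "image_mset (\<lambda>t. tau t i) (mset_set (s ` {1..k})) \<subseteq># mset ?X"
    unfolding mset_X
    by (rule image_mset_subseteq_mono, rule subset_imp_msubset_mset_set[OF Ssub]) (simp add: nodes_def)
  have sz: "size (image_mset (\<lambda>t. tau t i) (mset_set (s ` {1..k}))) = k"
    using card_image[OF inj] by simp
  from sorted_take_le[OF _ sub sz] sumeq s show ?thesis by auto
qed

lemma upper:
  assumes rtt: "rtt_function n tau" and i: "i \<in> nodes n"
    and k: "1 \<le> k" "k \<le> n" and G: "nn_graph n k tau G" and adm: "admissible n k sigma G"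
  shows "(\<Sum>j\<in>{1..k}. latency n tau sigma i j) \<le> sum_list (take k (sort (map (\<lambda>j. tau j i) [1..<n+1])))"
proof -
  have Gi: "G i \<subseteq> nodes n - {i}" "card (G i) = k - 1"
     "image_mset (\<lambda>t. tau t i) (mset_set (G i)) = mset (map (lambda_seq n tau i) [1..<k])"
    using G i by (auto simp: nn_graph_def)
  have finG: "finite (G i)" using Gi(1) finite_subset by (auto simp: nodes_def)
  have "\<forall>j\<in>{1..k}. \<exists>t. t \<in> {i} \<union> G i \<and> sigma t = j"
    using adm i by (auto simp: admissible_def decodable_def)
  then obtain t where t: "\<forall>j\<in>{1..k}. t j \<in> {i} \<union> G i \<and> sigma (t j) = j" by metis
  have inj: "inj_on t {1..k}" by (rule inj_onI) (metis t)
  have tsub: "t ` {1..k} \<subseteq> {i} \<union> G i" using t by auto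
  have cardU: "card ({i} \<union> G i) = k" using Gi finG k by (auto simp: card_insert_if)
  have teq: "t ` {1..k} = {i} \<union> G i"
    using card_subset_eq[OF _ tsub] finG cardU card_image[OF inj] by simp
  have "(\<Sum>j\<in>{1..k}. latency n tau sigma i j) \<le> (\<Sum>j\<in>{1..k}. tau (t j) i)"
  proof (rule sum_mono)
    fix j assume j: "j \<in> {1..k}"
    have "t j \<in> nodes n" using t j Gi(1) i by auto
    then show "latency n tau sigma i j \<le> tau (t j) i" using latency_le[OF rtt i] t j by blast
  qed
  also have "\<dots> = (\<Sum>u\<in>t ` {1..k}. tau u i)" using sum.reindex[OF inj, of "\<lambda>u. tau u i"] by simp
  also have "\<dots> = tau i i + (\<Sum>u\<in>G i. tau u i)" proof -
    have "i \<notin> G i" using Gi(1) by blast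
    then show ?thesis using teq finG by (simp add: sum.insert)
  qed
  also have "\<dots> = (\<Sum>u\<in>G i. tau u i)" using rtt i by (simp add: rtt_function_def)
  also have "\<dots> = sum_list (map (lambda_seq n tau i) [1..<k])"
    using Gi(3) by (simp add: sum_unfold_sum_mset flip: sum_mset_sum_list)
  also have "\<dots> = sum_list (take k (sort (map (\<lambda>j. tau j i) [1..<n+1])))"
    using take_eq[OF k, of tau i] X0[OF rtt i] by simp
  finally show ?thesis .
qed

theorem proposition3:
  fixes n k :: nat and tau :: "nat \<Rightarrow> nat \<Rightarrow> real" and sigma :: "nat \<Rightarrow> nat"
  assumes "1 \<le> k" and "k \<le> n"
    and "rtt_function n tau"
    and "uncoded_scheme n k sigma"
  shows "((\<exists>G. nn_graph n k tau G \<and> admissible n k sigma G) \<longrightarrow>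
           L_avg n k tau sigma =
             (1 / (real k * real n)) * (\<Sum>i\<in>nodes n. \<Sum>j\<in>{0..k-1}. lambda_seq n tau i j))
       \<and> (((\<forall>i\<in>nodes n. L_max n k tau sigma i = lambda_seq n tau i (k - 1)) \<and>
            L_avg n k tau sigma =
             (1 / (real k * real n)) * (\<Sum>i\<in>nodes n. \<Sum>j\<in>{0..k-1}. lambda_seq n tau i j))
          \<longrightarrow> (\<exists>G. nn_graph n k tau G \<and> admissible n k sigma G))"
proof -
  note k = assms(1,2) and rtt = assms(3) and unc = assms(4)
  define A where "A i = (\<Sum>j\<in>{1..k}. latency n tau sigma i j)" for i
  define B where "B i = sum_list (take k (sort (map (\<lambda>j. tau j i) [1..<n+1])))" for i
  have avg: "L_avg n k tau sigma = (1 / (real k * real n)) * sum A (nodes n)"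
    by (simp add: L_avg_def A_def)
  have rhs: "(1 / (real k * real n)) * (\<Sum>i\<in>nodes n. \<Sum>j\<in>{0..k-1}. lambda_seq n tau i j)
       = (1 / (real k * real n)) * sum B (nodes n)"
    using sumlam[OF k] by (simp add: B_def)
  have key: "\<forall>i\<in>nodes n. \<exists>s. (\<forall>j\<in>{1..k}. s j \<in> nodes n \<and> sigma (s j) = j) \<and> s (sigma i) = i \<and>
     B i \<le> A i \<and> (A i = B i \<longrightarrow> image_mset (\<lambda>t. tau t i) (mset_set (s ` {1..k})) = mset (take k (sort (map (\<lambda>j. tau j i) [1..<n+1]))))"
    using node_lemma[OF rtt unc _ k] unfolding A_def B_def by blast
  have BA: "\<forall>i\<in>nodes n. B i \<le> A i" using key by blast
  have fz: "1 / (real k * real n) \<noteq> 0" using k by simp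
  show ?thesis
  proof (intro conjI impI)
    assume "\<exists>G. nn_graph n k tau G \<and> admissible n k sigma G"
    then obtain G where G: "nn_graph n k tau G" "admissible n k sigma G" by blast
    have "\<forall>i\<in>nodes n. A i = B i"
      using upper[OF rtt _ k G] BA unfolding A_def B_def by (meson order_antisym)
    then show "L_avg n k tau sigma =
             (1 / (real k * real n)) * (\<Sum>i\<in>nodes n. \<Sum>j\<in>{0..k-1}. lambda_seq n tau i j)"
    proof -
      have "sum A (nodes n) = sum B (nodes n)" using \<open>\<forall>i\<in>nodes n. A i = B i\<close> by simp
      then show ?thesis using avg rhs by metis
    qed
  next
    assume "(\<forall>i\<in>nodes n. L_max n k tau sigma i = lambda_seq n tau i (k - 1)) \<and>
            L_avg n k tau sigma =
             (1 / (real k * real n)) * (\<Sum>i\<in>nodes n. \<Sum>j\<in>{0..k-1}. lambda_seq n tau i j)"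
    hence "sum A (nodes n) = sum B (nodes n)" using avg rhs fz by simp
    hence "(\<Sum>i\<in>nodes n. A i - B i) = 0" by (simp add: sum_subtractf)
    moreover have "finite (nodes n)" by (simp add: nodes_def)
    ultimately have "\<forall>i\<in>nodes n. A i - B i = 0" using BA sum_nonneg_eq_0_iff[of "nodes n" "\<lambda>i. A i - B i"] by simp
    hence AB: "\<forall>i\<in>nodes n. A i = B i" by simp
    obtain s where s: "\<forall>i\<in>nodes n. (\<forall>j\<in>{1..k}. s i j \<in> nodes n \<and> sigma (s i j) = j) \<and> s i (sigma i) = i \<and>
       (A i = B i \<longrightarrow> image_mset (\<lambda>t. tau t i) (mset_set (s i ` {1..k})) = mset (take k (sort (map (\<lambda>j. tau j i) [1..<n+1]))))"
      using bchoice[OF key] by blast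
    define G where "G i = s i ` {1..k} - {i}" for i
    have "nn_graph n k tau G" unfolding nn_graph_def
    proof
      fix i assume i: "i \<in> nodes n"
      have sj: "\<forall>j\<in>{1..k}. s i j \<in> nodes n \<and> sigma (s i j) = j" and si: "s i (sigma i) = i"
        and im: "image_mset (\<lambda>t. tau t i) (mset_set (s i ` {1..k})) = mset (take k (sort (map (\<lambda>j. tau j i) [1..<n+1])))"
        using s i AB by auto
      have sig: "sigma i \<in> {1..k}" using unc i by (auto simp: uncoded_scheme_def)
      have iS: "i \<in> s i ` {1..k}" using si sig by force
      have inj: "inj_on (s i) {1..k}" by (rule inj_onI) (metis sj)
      have c: "card (s i ` {1..k}) = k" using card_image[OF inj] by simp
      have "image_mset (\<lambda>t. tau t i) (mset_set (s i ` {1..k})) = add_mset (tau i i) (image_mset (\<lambda>t. tau t i) (mset_set (G i)))"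
        using mset_set.remove[OF _ iS] by (simp add: G_def)
      also have "tau i i = 0" using rtt i by (simp add: rtt_function_def)
      finally have "add_mset 0 (image_mset (\<lambda>t. tau t i) (mset_set (G i))) = add_mset 0 (mset (map (lambda_seq n tau i) [1..<k]))"
        using im take_eq[OF k, of tau i] X0[OF rtt i] by simp
      hence "image_mset (\<lambda>t. tau t i) (mset_set (G i)) = mset (map (lambda_seq n tau i) [1..<k])" by simp
      moreover have "G i \<subseteq> nodes n - {i}" using sj by (auto simp: G_def)
      moreover have "card (G i) = k - 1" using c iS by (simp add: G_def)
      ultimately show "G i \<subseteq> nodes n - {i} \<and> card (G i) = k - 1 \<and>
        image_mset (\<lambda>t. tau t i) (mset_set (G i)) = mset (map (lambda_seq n tau i) [1..<k])" by blast
    qed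
    moreover have "admissible n k sigma G" unfolding admissible_def decodable_def
    proof (intro ballI)
      fix i j assume i: "i \<in> nodes n" and j: "j \<in> {1..k}"
      have "s i j \<in> {i} \<union> G i" using j by (auto simp: G_def)
      then show "\<exists>t\<in>{i} \<union> G i. sigma t = j" using s i j by blast
    qed
    ultimately show "\<exists>G. nn_graph n k tau G \<and> admissible n k sigma G" by blast
  qed
qed

end
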